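(* Every 2-local 1-automorphism of a finite dimensional formally real Jordan algebra $\mathcal{A}$ is an automorphism.
   Context: A real Jordan algebra is formally real if $\sum_i a_i^2=0$ (finite sum) implies each $a_i=0$; $\mathcal{A}$ is unital with identity $1$. A symmetry is $s\in\mathcal{A}$ with $s^2=1$, and $U_s(x)=2s(sx)-x$. A 2-local 1-automorphism is a map $\Delta:\mathcal{A}\to\mathcal{A}$ (not assumed linear) such that for every $x,y\in\mathcal{A}$ there is a symmetry $s$ with $\Delta(x)=U_s(x)$ and $\Delta(y)=U_s(y)$. *)

theory Defs
  imports "HOL-Analysis.Analysis"
begin

definition jordan_algebra :: "('a::real_vector \<Rightarrow> 'a \<Rightarrow> 'a) \<Rightarrow> bool" where
  "jordan_algebra m \<longleftrightarrow>
     (\<forall>x y z. m (x + y) z = m x z + m y z) \<and>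
     (\<forall>c x y. m (c *\<^sub>R x) y = c *\<^sub>R m x y) \<and>
     (\<forall>x y. m x y = m y x) \<and>
     (\<forall>x y. m (m x y) (m x x) = m x (m y (m x x)))"

definition jordan_unit :: "('a \<Rightarrow> 'a \<Rightarrow> 'a) \<Rightarrow> 'a \<Rightarrow> bool" where
  "jordan_unit m e \<longleftrightarrow> (\<forall>x. m e x = x \<and> m x e = x)"

definition formally_real :: "('a::real_vector \<Rightarrow> 'a \<Rightarrow> 'a) \<Rightarrow> bool" where
  "formally_real m \<longleftrightarrow>
     (\<forall>(n::nat) (a::nat \<Rightarrow> 'a). (\<Sum>i<n. m (a i) (a i)) = 0 \<longrightarrow> (\<forall>i<n. a i = 0))"

definition finite_dim_space :: "'a::real_vector itself \<Rightarrow> bool" where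
  "finite_dim_space _ \<longleftrightarrow> (\<exists>B::'a set. finite B \<and> span B = UNIV)"

definition symmetry :: "('a \<Rightarrow> 'a \<Rightarrow> 'a) \<Rightarrow> 'a \<Rightarrow> 'a \<Rightarrow> bool" where
  "symmetry m e s \<longleftrightarrow> m s s = e"

definition U_op :: "('a::real_vector \<Rightarrow> 'a \<Rightarrow> 'a) \<Rightarrow> 'a \<Rightarrow> 'a \<Rightarrow> 'a" where
  "U_op m s x = 2 *\<^sub>R m s (m s x) - x"

definition two_local_1_automorphism ::
    "('a::real_vector \<Rightarrow> 'a \<Rightarrow> 'a) \<Rightarrow> 'a \<Rightarrow> ('a \<Rightarrow> 'a) \<Rightarrow> bool" where
  "two_local_1_automorphism m e \<Delta> \<longleftrightarrow>
     (\<forall>x y. \<exists>s. symmetry m e s \<and> \<Delta> x = U_op m s x \<and> \<Delta> y = U_op m s y)"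

definition jordan_automorphism :: "('a::real_vector \<Rightarrow> 'a \<Rightarrow> 'a) \<Rightarrow> ('a \<Rightarrow> 'a) \<Rightarrow> bool" where
  "jordan_automorphism m T \<longleftrightarrow> linear T \<and> bij T \<and> (\<forall>x y. T (m x y) = m (T x) (T y))"

end

theory Submission
  imports Defs "HOL-Computational_Algebra.Fundamental_Theorem_Algebra"
begin

lemma scaleR_4: "(4::real) *\<^sub>R (x::'a::real_vector) = x + x + x + x"
proof -
  have "(4::real) = 1 + 1 + 1 + 1" by simp
  then show ?thesis by (metis scaleR_add_left scaleR_one)
qed

locale jalg =
  fixes m :: "'a::real_vector \<Rightarrow> 'a \<Rightarrow> 'a" and e :: 'a
  assumes add_left: "m (x + y) z = m x z + m y z"
    and scale_left: "m (c *\<^sub>R x) y = c *\<^sub>R m x y"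
    and comm: "m x y = m y x"
    and jordan: "m (m x y) (m x x) = m x (m y (m x x))"
    and unit_left: "m e x = x"
begin

lemma add_right: "m x (y + z) = m x y + m x z"
  using add_left comm by metis
lemma scale_right: "m x (c *\<^sub>R y) = c *\<^sub>R m x y"
  using scale_left comm by metis
lemma unit_right: "m x e = x"
  using unit_left comm by metis
lemma lin_left: "linear (\<lambda>x. m x y)"
  by (rule linearI) (simp_all add: add_left scale_left)
lemma lin_right: "linear (\<lambda>y. m x y)"
  by (rule linearI) (simp_all add: add_right scale_right)
lemma zero_left[simp]: "m 0 x = 0"
  using linear_0[OF lin_left] .
lemma zero_right[simp]: "m x 0 = 0"
  using linear_0[OF lin_right] .
lemma neg_left: "m (- x) y = - m x y"
  using linear_neg[OF lin_left] .
lemma neg_right: "m x (- y) = - m x y"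
  using linear_neg[OF lin_right] .
lemma diff_left: "m (x - y) z = m x z - m y z"
  using linear_diff[OF lin_left] .
lemma diff_right: "m x (y - z) = m x y - m x z"
  using linear_diff[OF lin_right] .
lemma sum_left: "m (sum f I) y = (\<Sum>i\<in>I. m (f i) y)"
  using linear_sum[OF lin_left] .
lemma sum_right: "m y (sum f I) = (\<Sum>i\<in>I. m y (f i))"
  using linear_sum[OF lin_right] .

lemmas bil = add_left add_right scale_left scale_right neg_left neg_right diff_left diff_right

lemma J1: "m (m w y) (m x x) + 2 *\<^sub>R m (m x y) (m x w) - m w (m y (m x x)) - 2 *\<^sub>R m x (m y (m x w)) = 0"
proof -
  have a: "m (m (x+w) y) (m (x+w) (x+w)) = m (x+w) (m y (m (x+w) (x+w)))" by (rule jordan)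
  have b: "m (m (x-w) y) (m (x-w) (x-w)) = m (x-w) (m y (m (x-w) (x-w)))" by (rule jordan)
  have c: "m (m w y) (m w w) = m w (m y (m w w))" by (rule jordan)
  have "m (m (x+w) y) (m (x+w) (x+w)) - m (x+w) (m y (m (x+w) (x+w)))
      - (m (m (x-w) y) (m (x-w) (x-w)) - m (x-w) (m y (m (x-w) (x-w))))
      - 2 *\<^sub>R (m (m w y) (m w w) - m w (m y (m w w)))
      = 2 *\<^sub>R (m (m w y) (m x x) + 2 *\<^sub>R m (m x y) (m x w) - m w (m y (m x x)) - 2 *\<^sub>R m x (m y (m x w)))"
    by (simp add: bil algebra_simps comm[of w x] scaleR_2)
  with a b c show ?thesis by simp
qed


lemma Q: "m (m w y) (m x a) + m (m x y) (m a w) + m (m a y) (m x w) - m w (m y (m x a)) - m x (m y (m a w)) - m a (m y (m x w)) = 0"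
proof -
  have a: "m (m w y) (m (x+a) (x+a)) + 2 *\<^sub>R m (m (x+a) y) (m (x+a) w) - m w (m y (m (x+a) (x+a))) - 2 *\<^sub>R m (x+a) (m y (m (x+a) w)) = 0" by (rule J1)
  have b: "m (m w y) (m x x) + 2 *\<^sub>R m (m x y) (m x w) - m w (m y (m x x)) - 2 *\<^sub>R m x (m y (m x w)) = 0" by (rule J1)
  have c: "m (m w y) (m a a) + 2 *\<^sub>R m (m a y) (m a w) - m w (m y (m a a)) - 2 *\<^sub>R m a (m y (m a w)) = 0" by (rule J1)
  have "(m (m w y) (m (x+a) (x+a)) + 2 *\<^sub>R m (m (x+a) y) (m (x+a) w) - m w (m y (m (x+a) (x+a))) - 2 *\<^sub>R m (x+a) (m y (m (x+a) w)))
     - (m (m w y) (m x x) + 2 *\<^sub>R m (m x y) (m x w) - m w (m y (m x x)) - 2 *\<^sub>R m x (m y (m x w)))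
     - (m (m w y) (m a a) + 2 *\<^sub>R m (m a y) (m a w) - m w (m y (m a a)) - 2 *\<^sub>R m a (m y (m a w)))
     = 2 *\<^sub>R (m (m w y) (m x a) + m (m x y) (m a w) + m (m a y) (m x w) - m w (m y (m x a)) - m x (m y (m a w)) - m a (m y (m x w)))"
    by (simp add: bil algebra_simps comm[of a x] scaleR_2)
  with a b c show ?thesis by simp
qed

lemma Es:
  assumes ss: "m s s = e"
  shows "m (m s y) (m s w) = m s (m y (m s w))"
proof -
  have "m (m w y) (m s s) + 2 *\<^sub>R m (m s y) (m s w) - m w (m y (m s s)) - 2 *\<^sub>R m s (m y (m s w)) = 0" by (rule J1)
  hence "2 *\<^sub>R m (m s y) (m s w) - 2 *\<^sub>R m s (m y (m s w)) = 0"
    by (simp add: ss unit_right)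
  thus ?thesis by (simp add: algebra_simps)
qed

lemma S3:
  assumes ss: "m s s = e"
  shows "m s (m s (m s v)) = m s v"
  using Es[OF ss, of s v] by (simp add: ss unit_left)

definition UU :: "'a \<Rightarrow> 'a \<Rightarrow> 'a" where "UU s x = 2 *\<^sub>R m s (m s x) - x"

lemma UU_invol:
  assumes ss: "m s s = e"
  shows "UU s (UU s v) = v"
  unfolding UU_def using S3[OF ss, of "m s v"] apply (simp add: bil algebra_simps)
  by (simp flip: scaleR_add_left)

lemma UU_lin: "linear (UU s)"
  unfolding UU_def by (rule linearI) (simp_all add: bil algebra_simps)

lemma UU_key:
  assumes ss: "m s s = e"
  shows "m (UU s a) v = UU s (m a (UU s v))"
proof -
  have q: "m (m v s)(m s a) + m (m s s)(m a v) + m (m a s)(m s v) - m v (m s (m s a)) - m s (m s (m a v)) - m a (m s (m s v)) = 0"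
    by (rule Q)
  have e1: "m (m s a) (m s v) = m s (m a (m s v))" by (rule Es[OF ss])
  have f: "m (m s a) (m s z) = m s (m (m s a) z)" for z
    using Es[OF ss, of z a] by (simp add: comm)
  have e2: "m s (m s (m a (m s (m s v)))) = m s (m a (m s v))"
  proof -
    have "m s (m a (m s (m s v))) = m (m s a) (m s (m s v))" by (rule Es[OF ss, symmetric])
    hence "m s (m s (m a (m s (m s v)))) = m s (m (m s a) (m s (m s v)))" by simp
    also have "\<dots> = m (m s a) (m s (m s (m s v)))" by (rule f[symmetric])
    also have "\<dots> = m (m s a) (m s v)" by (simp add: S3[OF ss])
    finally show ?thesis using e1 by simp
  qed
  have g1: "m (m v s) (m s a) = m s (m a (m s v))" using e1 by (metis comm)
  have g2: "m (m a s) (m s v) = m s (m a (m s v))" using e1 by (metis comm)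
  have g3: "m (m s s) (m a v) = m a v" by (simp add: ss unit_left)
  have lhs: "m v (m s (m s a)) = 2 *\<^sub>R m s (m a (m s v)) + m a v - m s (m s (m a v)) - m a (m s (m s v))"
    using q unfolding g1 g2 g3 by (simp add: algebra_simps scaleR_2 scaleR_4)
  have l2: "m (UU s a) v = 2 *\<^sub>R m v (m s (m s a)) - m a v"
    unfolding UU_def by (simp add: bil comm[of _ v])
  have r2: "UU s (m a (UU s v)) = 4 *\<^sub>R m s (m s (m a (m s (m s v)))) - 2 *\<^sub>R m s (m s (m a v)) - 2 *\<^sub>R m a (m s (m s v)) + m a v"
    unfolding UU_def by (simp add: bil algebra_simps)
  show ?thesis unfolding l2 r2 lhs e2 by (simp add: algebra_simps scaleR_2 scaleR_4)
qed

lemma UU_hom: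
  assumes ss: "m s s = e"
  shows "UU s (m a b) = m (UU s a) (UU s b)"
  using UU_key[OF ss, of a "UU s b"] UU_invol[OF ss, of b] by simp

end

context jalg
begin

declare unit_left[simp] unit_right[simp]

fun pw :: "'a \<Rightarrow> nat \<Rightarrow> 'a" where
  "pw x 0 = e"
| "pw x (Suc n) = m x (pw x n)"

lemma pw1[simp]: "pw x (Suc 0) = x" by (simp add: unit_right)
lemma pw2: "pw x 2 = m x x" by (simp add: numeral_2_eq_2)

lemma II: "m (m y (m x x)) v = m (m x x) (m y v) + 2 *\<^sub>R m (m x y) (m x v) - 2 *\<^sub>R m x (m y (m x v))"
proof -
  have "m (m v y) (m x x) + 2 *\<^sub>R m (m x y) (m x v) - m v (m y (m x x)) - 2 *\<^sub>R m x (m y (m x v)) = 0" by (rule J1)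
  moreover have "m (m v y) (m x x) = m (m x x) (m y v)" by (metis comm)
  moreover have "m v (m y (m x x)) = m (m y (m x x)) v" by (rule comm)
  ultimately show ?thesis by (simp add: algebra_simps)
qed

lemma pw_comm_aux:
  "\<forall>i j v. i \<le> n \<longrightarrow> j \<le> n \<longrightarrow> m (pw x i) (m (pw x j) v) = m (pw x j) (m (pw x i) v)"
proof (induction n rule: less_induct)
  case (less n)
  show ?case
  proof (cases "n \<le> 2")
    case True
    have c12: "m (pw x 1) (m (pw x 2) v) = m (pw x 2) (m (pw x 1) v)" for v
      using jordan[of x v] by (simp add: pw2 comm)
    show ?thesis
    proof (intro allI impI)
      fix i j v assume "i \<le> n" "j \<le> n"
      with True have "i \<in> {0,1,2}" "j \<in> {0,1,2}" by auto
      then show "m (pw x i) (m (pw x j) v) = m (pw x j) (m (pw x i) v)"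
        using c12 c12[symmetric] by (auto simp: unit_left)
    qed
  next
    case False
    then obtain k where k: "n = Suc k" "k \<ge> 2" by (cases n) auto
    from less k have IH: "\<And>i j v. i \<le> k \<Longrightarrow> j \<le> k \<Longrightarrow> m (pw x i) (m (pw x j) v) = m (pw x j) (m (pw x i) v)"
      by auto
    obtain l where l: "k = Suc l" "l \<ge> 1" using k by (cases k) auto
    define y where "y = pw x l"
    define z where "z = pw x k"
    have z: "z = m x y" unfolding z_def y_def l by simp
    have pn: "pw x n = m y (m x x)"
    proof -
      have "m y (m x x) = m y (m (pw x 1) x)" by simp
      also have "\<dots> = m (pw x 1) (m y x)" unfolding y_def by (rule IH) (use l in auto)
      also have "\<dots> = pw x n" using k l by (simp add: y_def comm)
      finally show ?thesis by simp
    qed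
    have Ln: "m (pw x n) v = m (m x x) (m y v) + 2 *\<^sub>R m z (m x v) - 2 *\<^sub>R m x (m y (m x v))" for v
      unfolding pn z by (rule II)
    have cj: "m (pw x n) (m (pw x j) v) = m (pw x j) (m (pw x n) v)" if j: "j \<le> k" for j v
    proof -
      define P where "P = pw x j"
      have c2: "m (m x x) (m P u) = m P (m (m x x) u)" for u
        using IH[of 2 j u] j k by (simp add: pw2 P_def)
      have c1: "m x (m P u) = m P (m x u)" for u
        using IH[of 1 j u] j k by (simp add: P_def)
      have cy: "m y (m P u) = m P (m y u)" for u
        using IH[of l j u] j l by (simp add: P_def y_def)
      have cz: "m z (m P u) = m P (m z u)" for u
        using IH[of k j u] j by (simp add: P_def z_def)
      have "m (pw x n) (m P v) = m (m x x) (m y (m P v)) + 2 *\<^sub>R m z (m x (m P v)) - 2 *\<^sub>R m x (m y (m x (m P v)))"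
        by (rule Ln)
      also have "\<dots> = m P (m (m x x) (m y v)) + 2 *\<^sub>R m P (m z (m x v)) - 2 *\<^sub>R m P (m x (m y (m x v)))"
        by (simp add: c1 c2 cy cz)
      also have "\<dots> = m P (m (pw x n) v)"
        by (simp add: Ln bil)
      finally show ?thesis by (simp add: P_def)
    qed
    show ?thesis
    proof (intro allI impI)
      fix i j v assume i: "i \<le> n" and j: "j \<le> n"
      show "m (pw x i) (m (pw x j) v) = m (pw x j) (m (pw x i) v)"
      proof (cases "i = n")
        case True
        then show ?thesis using cj[of j] j k by (cases "j = n") auto
      next
        case False
        show ?thesis
        proof (cases "j = n")
          case True
          then show ?thesis using cj[of i] i False k by auto
        next
          case False
          then show ?thesis using IH[of i j] i j \<open>i \<noteq> n\<close> k by auto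
        qed
      qed
    qed
  qed
qed

lemma pw_comm: "m (pw x i) (m (pw x j) v) = m (pw x j) (m (pw x i) v)"
  using pw_comm_aux[of "max i j" x] by auto

lemma pw_add: "m (pw x i) (pw x j) = pw x (i + j)"
proof (induction i)
  case 0 then show ?case by (simp add: unit_left)
next
  case (Suc i)
  have "m (pw x (Suc i)) (pw x j) = m (pw x j) (m (pw x 1) (pw x i))" by (simp add: comm)
  also have "\<dots> = m (pw x 1) (m (pw x j) (pw x i))" by (rule pw_comm)
  also have "\<dots> = pw x (Suc i + j)" using Suc by (simp add: comm)
  finally show ?case .
qed

end

context jalg
begin

definition pev :: "real poly \<Rightarrow> 'a \<Rightarrow> 'a" where
  "pev p x = (\<Sum>i\<le>degree p. coeff p i *\<^sub>R pw x i)"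

lemma pev_bound: "degree p \<le> N \<Longrightarrow> pev p x = (\<Sum>i\<le>N. coeff p i *\<^sub>R pw x i)"
  unfolding pev_def by (rule sum.mono_neutral_left) (auto simp: coeff_eq_0)

lemma pev_0[simp]: "pev 0 x = 0" by (simp add: pev_def)

lemma pev_add: "pev (p + q) x = pev p x + pev q x"
proof -
  let ?N = "max (degree p) (degree q)"
  have "degree (p + q) \<le> ?N" by (rule degree_add_le) auto
  then show ?thesis
    by (simp add: pev_bound[of _ ?N] pev_bound[of p ?N] pev_bound[of q ?N] scaleR_add_left sum.distrib)
qed

lemma pev_smult: "pev (smult c p) x = c *\<^sub>R pev p x"
  by (simp add: pev_bound[of "smult c p" "degree p"] pev_def scaleR_sum_right)

lemma pev_minus: "pev (- p) x = - pev p x"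
  using pev_smult[of "-1" p x] by simp

lemma pev_diff: "pev (p - q) x = pev p x - pev q x"
  using pev_add[of p "-q" x] pev_minus[of q x] by simp

lemma pev_pCons: "pev (pCons a p) x = a *\<^sub>R e + m x (pev p x)"
proof -
  have "pev (pCons a p) x = (\<Sum>i\<le>Suc (degree p). coeff (pCons a p) i *\<^sub>R pw x i)"
    by (rule pev_bound) (simp add: degree_pCons_le)
  also have "\<dots> = a *\<^sub>R e + (\<Sum>i\<le>degree p. coeff p i *\<^sub>R m x (pw x i))"
    by (subst sum.atMost_Suc_shift) simp
  also have "\<dots> = a *\<^sub>R e + m x (pev p x)"
    by (simp add: pev_def sum_right scale_right)
  finally show ?thesis .
qed

lemma pev_const: "pev [:c:] x = c *\<^sub>R e"
  using pev_pCons[of c 0 x] by simp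

lemma pev_1: "pev 1 x = e"
  using pev_const[of 1 x] by (simp add: one_pCons)

lemma pev_lin: "pev [:a, 1:] x = a *\<^sub>R e + x"
  using pev_pCons[of a "[:1:]" x] by (simp add: pev_const)

lemma pev_comm: "m (pev p x) (m (pw x j) v) = m (pw x j) (m (pev p x) v)"
  by (simp add: pev_def sum_left sum_right scale_left scale_right pw_comm)

lemma pev_mult: "pev (p * q) x = m (pev p x) (pev q x)"
proof (induction p rule: pCons_induct)
  case 0 then show ?case by simp
next
  case (pCons a p)
  have "pev (pCons a p * q) x = a *\<^sub>R pev q x + m x (m (pev p x) (pev q x))"
    by (simp add: pev_add pev_smult pev_pCons pCons.IH)
  also have "m x (m (pev p x) (pev q x)) = m (m x (pev p x)) (pev q x)"
  proof -
    have "m (m x (pev p x)) (pev q x) = m (pev q x) (m (pw x 1) (pev p x))" by (simp add: comm)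
    also have "\<dots> = m (pw x 1) (m (pev q x) (pev p x))" by (rule pev_comm)
    finally show ?thesis by (simp add: comm)
  qed
  finally show ?case by (simp add: pev_pCons bil)
qed

lemma pev_monom: "pev (monom c n) x = c *\<^sub>R pw x n"
proof (cases "c = 0")
  case True then show ?thesis by simp
next
  case False
  have "(\<Sum>i\<le>n. (if n = i then c else 0) *\<^sub>R pw x i) = (\<Sum>i\<le>n. if n = i then c *\<^sub>R pw x i else 0)"
    by (rule sum.cong) auto
  with False show ?thesis by (simp add: pev_def degree_monom_eq)
qed

lemma pev_sum: "pev (sum f I) x = (\<Sum>i\<in>I. pev (f i) x)"
  by (induction I rule: infinite_finite_induct) (auto simp: pev_add)

lemma pev_prod_comm: "pev (p * q) x = pev (q * p) x"
  by (simp add: mult.commute)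

end

lemma ofr_add: "map_poly complex_of_real (p + q) = map_poly complex_of_real p + map_poly complex_of_real q"
  by (rule poly_eqI) (simp add: coeff_map_poly)

lemma ofr_mult: "map_poly complex_of_real (p * q) = map_poly complex_of_real p * map_poly complex_of_real q"
  by (rule poly_eqI) (simp add: coeff_map_poly coeff_mult)

lemma ofr_poly: "poly (map_poly complex_of_real p) (of_real r) = of_real (poly p r)"
  by (induction p rule: pCons_induct) (simp_all add: map_poly_pCons)

lemma ofr_root:
  fixes h :: "real poly"
  assumes "degree h > 0"
  shows "\<exists>z. poly (map_poly complex_of_real h) z = 0"
proof -
  have "degree (map_poly complex_of_real h) = degree h" by (rule degree_map_poly) simp
  with assms have "\<not> constant (poly (map_poly complex_of_real h))" by (simp add: constant_degree)
  then show ?thesis by (rule fundamental_theorem_of_algebra)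
qed

lemma quad_dvd:
  fixes h :: "real poly"
  assumes z: "poly (map_poly complex_of_real h) z = 0" and im: "Im z \<noteq> 0"
  shows "[:Re z ^ 2 + Im z ^ 2, - 2 * Re z, 1:] dvd h"
proof -
  define qd where "qd = [:Re z ^ 2 + Im z ^ 2, - 2 * Re z, 1:]"
  have qd0: "qd \<noteq> 0" by (simp add: qd_def)
  have dq: "degree qd = 2" by (simp add: qd_def)
  define r where "r = h mod qd"
  have hr: "h = h div qd * qd + r" by (simp add: r_def)
  obtain a b where zab: "z = Complex a b" by (cases z)
  have "poly (map_poly complex_of_real qd) z = of_real (a^2 + b^2) + z * (of_real (-2 * a) + z)"
    by (simp add: qd_def map_poly_pCons zab)
  also have "\<dots> = 0" by (simp add: zab complex_eq_iff power2_eq_square algebra_simps)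
  finally have qz: "poly (map_poly complex_of_real qd) z = 0" .
  have "poly (map_poly complex_of_real h) z = poly (map_poly complex_of_real (h div qd)) z * poly (map_poly complex_of_real qd) z + poly (map_poly complex_of_real r) z"
    by (subst hr) (simp only: ofr_add ofr_mult poly_add poly_mult)
  then have rz: "poly (map_poly complex_of_real r) z = 0" using z qz by simp
  have "r = 0 \<or> degree r < 2" using degree_mod_less[OF qd0, of h] dq by (auto simp: r_def)
  then have dr: "degree r \<le> 1" by auto
  have rr: "r = [:coeff r 0, coeff r 1:]"
    by (rule poly_eqI) (use dr in \<open>auto simp: coeff_pCons coeff_eq_0 split: nat.splits\<close>)
  have "of_real (coeff r 0) + of_real (coeff r 1) * z = 0"
    using rz by (subst (asm) rr) (simp add: map_poly_pCons mult.commute)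
  then have "coeff r 1 * Im z = 0" "coeff r 0 + coeff r 1 * Re z = 0"
    by (simp_all add: complex_eq_iff)
  with im have "coeff r 1 = 0" "coeff r 0 = 0" by auto
  then have "r = 0" by (subst rr) simp
  then have "h = h div qd * qd" using hr by simp
  then have "qd dvd h" by (metis dvd_triv_right)
  then show ?thesis by (simp add: qd_def)
qed

lemma vanish_dvd:
  fixes q :: "real poly"
  assumes "finite S" "\<forall>r\<in>S. poly q r = 0"
  shows "(\<Prod>r\<in>S. [:-r, 1:]) dvd q"
  using assms
proof (induction S arbitrary: q rule: finite_induct)
  case empty then show ?case by simp
next
  case (insert r S)
  then have "[:-r, 1:] dvd q" by (simp add: poly_eq_0_iff_dvd)
  then obtain q' where q': "q = [:-r, 1:] * q'" by (auto simp: dvd_def)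
  have "\<forall>s\<in>S. poly q' s = 0"
  proof
    fix s assume "s \<in> S"
    with insert have "poly q s = 0" "s \<noteq> r" by auto
    then show "poly q' s = 0" using q' by simp
  qed
  with insert.IH have "(\<Prod>r\<in>S. [:-r, 1:]) dvd q'" by blast
  have "(\<Prod>r\<in>insert r S. [:-r, 1:]) = [:-r, 1:] * (\<Prod>r\<in>S. [:-r, 1:])"
    using insert by simp
  then show ?case using q' \<open>(\<Prod>r\<in>S. [:-r, 1:]) dvd q'\<close> by (metis mult_dvd_mono dvd_refl)
qed

locale jfr = jalg m e for m :: "'a::real_vector \<Rightarrow> 'a \<Rightarrow> 'a" and e +
  fixes B0 :: "'a set"
  assumes fr: "(\<Sum>i<(n::nat). m (a i) (a i)) = 0 \<Longrightarrow> \<forall>i<n. a i = 0"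
    and finB0: "finite B0" and spanB0: "span B0 = UNIV"
begin

lemma fr1: "m v v = 0 \<Longrightarrow> v = 0"
  using fr[where n=1 and a="\<lambda>_. v"] by simp

lemma fr2: "m u u + m v v = 0 \<Longrightarrow> v = 0"
proof -
  assume "m u u + m v v = 0"
  then have "\<forall>i<(2::nat). (if i = 0 then u else v) = 0"
    using fr[where n=2 and a="\<lambda>i. if i = 0 then u else v"] by (simp add: numeral_2_eq_2)
  from this[rule_format, of 1] show "v = 0" by simp
qed

lemma ex_annih: "\<exists>p. p \<noteq> 0 \<and> pev p x = 0"
proof (cases "inj_on (pw x) {..card B0}")
  case False
  then obtain i j where ij: "i \<noteq> j" "pw x i = pw x j" by (auto simp: inj_on_def)
  define p where "p = monom (1::real) i - monom 1 j"
  have "coeff p i = 1" using ij by (simp add: p_def coeff_monom)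
  then have "p \<noteq> 0" by auto
  moreover have "pev p x = 0" using ij by (simp add: p_def pev_diff pev_monom)
  ultimately show ?thesis by blast
next
  case True
  define N where "N = card B0"
  define X where "X = pw x ` {..N}"
  have cX: "card X = Suc N" using True by (simp add: X_def N_def card_image)
  have fX: "finite X" by (simp add: X_def)
  have "dependent X"
  proof (rule ccontr)
    assume "independent X"
    then have "card X \<le> card B0"
      using independent_span_bound[OF finB0, of X] spanB0 by auto
    with cX show False by (simp add: N_def)
  qed
  then obtain u where u: "\<exists>v\<in>X. u v \<noteq> 0" "(\<Sum>v\<in>X. u v *\<^sub>R v) = 0"
    using dependent_finite[OF fX] by auto
  define p where "p = (\<Sum>i\<le>N. monom (u (pw x i)) i)"
  have "pev p x = (\<Sum>i\<le>N. u (pw x i) *\<^sub>R pw x i)"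
    by (simp add: p_def pev_sum pev_monom)
  also have "\<dots> = (\<Sum>v\<in>X. u v *\<^sub>R v)"
    unfolding X_def using True by (simp add: sum.reindex N_def)
  finally have pe: "pev p x = 0" using u by simp
  from u obtain i where i: "i \<le> N" "u (pw x i) \<noteq> 0" by (auto simp: X_def)
  have "coeff p i = (\<Sum>k\<le>N. if k = i then u (pw x k) else 0)"
    by (simp add: p_def coeff_sum coeff_monom)
  also have "\<dots> = u (pw x i)" using i by simp
  finally have "p \<noteq> 0" using i by auto
  with pe show ?thesis by blast
qed

end

context jfr
begin

lemma min_annih:
  fixes x :: 'a
  obtains p where "p \<noteq> 0" "pev p x = 0" "\<And>q. q \<noteq> 0 \<Longrightarrow> pev q x = 0 \<Longrightarrow> degree p \<le> degree q"
proof -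
  from ex_annih[of x] obtain p0 where "p0 \<noteq> 0 \<and> pev p0 x = 0" by blast
  from ex_has_least_nat[of "\<lambda>p. p \<noteq> 0 \<and> pev p x = 0", OF this, of degree]
  obtain p where P: "p \<noteq> 0 \<and> pev p x = 0" "\<forall>q. q \<noteq> 0 \<and> pev q x = 0 \<longrightarrow> degree p \<le> degree q" by blast
  show ?thesis by (rule that[of p]) (use P in auto)
qed

lemma sqfree:
  assumes p0: "p \<noteq> 0" and pe: "pev p x = 0"
    and mn: "\<And>q. q \<noteq> 0 \<Longrightarrow> pev q x = 0 \<Longrightarrow> degree p \<le> degree q"
    and pd: "p = [:-r, 1:] * [:-r, 1:] * h"
  shows False
proof -
  define q where "q = [:-r, 1:] * h"
  have h0: "h \<noteq> 0" using p0 pd by auto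
  have l0: "[:-r, 1:] \<noteq> 0" by simp
  have q0: "q \<noteq> 0" unfolding q_def mult_eq_0_iff using h0 by simp
  have dq: "degree q = degree [:-r, 1:] + degree h" unfolding q_def by (rule degree_mult_eq[OF l0 h0])
  have "degree p = degree [:-r, 1:] + degree q" unfolding pd mult.assoc q_def[symmetric] by (rule degree_mult_eq[OF l0 q0])
  moreover have "degree q = 1 + degree h" using dq by simp
  ultimately have dl: "degree q < degree p" by simp
  have "q * q = p * h" by (simp only: pd q_def ac_simps)
  then have "m (pev q x) (pev q x) = 0" using pe by (metis pev_mult zero_left)
  then have "pev q x = 0" by (rule fr1)
  with mn[OF q0] dl show False by simp
qed

lemma noquad:
  assumes p0: "p \<noteq> 0" and pe: "pev p x = 0"
    and mn: "\<And>q. q \<noteq> 0 \<Longrightarrow> pev q x = 0 \<Longrightarrow> degree p \<le> degree q"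
    and pd: "p = [:a^2 + b^2, -2 * a, 1:] * h" and b: "b \<noteq> 0"
  shows False
proof -
  have h0: "h \<noteq> 0" using p0 pd by auto
  have "degree p = degree [:a^2 + b^2, -2 * a, 1:] + degree h" unfolding pd by (rule degree_mult_eq) (simp_all add: h0)
  then have dl: "degree h < degree p" by simp
  have id: "[:-a, 1:] * [:-a, 1:] + [:b:] * [:b:] = [:a^2 + b^2, -2 * a, 1:]"
    by (simp add: power2_eq_square algebra_simps)
  have "([:-a, 1:] * h) * ([:-a, 1:] * h) + ([:b:] * h) * ([:b:] * h) = p * h"
    unfolding pd id[symmetric] by (simp only: distrib_left distrib_right ac_simps)
  then have "m (pev ([:-a, 1:] * h) x) (pev ([:-a, 1:] * h) x) + m (pev ([:b:] * h) x) (pev ([:b:] * h) x) = 0"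
    using pe by (metis pev_mult pev_add zero_left)
  then have "pev ([:b:] * h) x = 0" by (rule fr2)
  then have "b *\<^sub>R pev h x = 0" by (simp add: pev_mult pev_const scale_left pev_smult)
  with b have "pev h x = 0" by simp
  with mn[OF h0] dl show False by simp
qed

lemma split_annih: "\<exists>S. finite S \<and> pev (\<Prod>r\<in>S. [:-r, 1:]) x = 0"
proof -
  obtain p where p0: "p \<noteq> 0" and pe: "pev p x = 0" and mn: "\<And>q. q \<noteq> 0 \<Longrightarrow> pev q x = 0 \<Longrightarrow> degree p \<le> degree q"
    using min_annih[of x] by blast
  define S where "S = {r. poly p r = 0}"
  have fS: "finite S" unfolding S_def using p0 by (rule poly_roots_finite)
  define g where "g = (\<Prod>r\<in>S. [:-r, 1:])"
  have "g dvd p" unfolding g_def by (rule vanish_dvd[OF fS]) (simp add: S_def)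
  then obtain h where ph: "p = g * h" by (auto simp: dvd_def)
  have h0: "h \<noteq> 0" using p0 ph by auto
  show ?thesis
  proof (cases "degree h = 0")
    case True
    then obtain c where hc: "h = [:c:]" by (metis degree_eq_zeroE)
    with h0 have c0: "c \<noteq> 0" by auto
    have "pev p x = c *\<^sub>R pev g x" by (simp add: ph hc pev_mult pev_const scale_right pev_smult)
    with pe c0 have "pev g x = 0" by simp
    with fS show ?thesis unfolding g_def by blast
  next
    case False
    then obtain z where z: "poly (map_poly complex_of_real h) z = 0" using ofr_root by blast
    show ?thesis
    proof (cases "Im z = 0")
      case True
      define r where "r = Re z"
      have "z = of_real r" using True by (simp add: r_def complex_eq_iff)
      with z have "poly h r = 0" by (simp add: ofr_poly)
      then have hr: "[:-r, 1:] dvd h" by (simp add: poly_eq_0_iff_dvd)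
      then obtain k where hk: "h = [:-r, 1:] * k" by (auto simp: dvd_def)
      have "poly p r = 0" using \<open>poly h r = 0\<close> ph by simp
      then have rS: "r \<in> S" by (simp add: S_def)
      have geq: "g = [:-r, 1:] * (\<Prod>r\<in>S - {r}. [:-r, 1:])"
        unfolding g_def using fS rS by (simp add: prod.remove)
      have "p = [:-r, 1:] * [:-r, 1:] * ((\<Prod>r\<in>S - {r}. [:-r, 1:]) * k)"
        by (simp only: ph hk geq ac_simps)
      with sqfree[OF p0 pe mn] show ?thesis by blast
    next
      case False
      from quad_dvd[OF z False] obtain k where "h = [:Re z ^ 2 + Im z ^ 2, - 2 * Re z, 1:] * k"
        by (auto simp: dvd_def)
      then have "p = [:Re z ^ 2 + Im z ^ 2, - 2 * Re z, 1:] * (g * k)" using ph by (simp add: algebra_simps)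
      with noquad[OF p0 pe mn _ False] show ?thesis by blast
    qed
  qed
qed

lemma vanish_pev:
  assumes fS: "finite S" and g: "pev (\<Prod>r\<in>S. [:-r, 1:]) x = 0" and q: "\<forall>r\<in>S. poly q r = 0"
  shows "pev q x = 0"
proof -
  obtain k where "q = (\<Prod>r\<in>S. [:-r, 1:]) * k" using vanish_dvd[OF fS q] by (auto simp: dvd_def)
  then show ?thesis using g by (simp add: pev_mult)
qed

lemma spectral:
  "\<exists>S f. finite S \<and> (\<forall>r\<in>S. m (f r) (f r) = f r) \<and> m x x = (\<Sum>r\<in>S. r^2 *\<^sub>R f r)"
proof -
  obtain S where fS: "finite S" and g: "pev (\<Prod>r\<in>S. [:-r, 1:]) x = 0" using split_annih by blast
  define l where "l r = (\<Prod>u\<in>S - {r}. smult (1 / (r - u)) [:-u, 1:])" for r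
  have pl: "poly (l r) v = (if v = r then 1 else 0)" if "r \<in> S" "v \<in> S" for r v
  proof (cases "v = r")
    case True
    have "poly (l r) v = (\<Prod>u\<in>S - {r}. 1)"
      unfolding l_def poly_prod
    proof (rule prod.cong)
      fix u assume "u \<in> S - {r}"
      then have "r - u \<noteq> 0" by auto
      then show "poly (smult (1 / (r - u)) [:- u, 1:]) v = 1" using True by (simp add: diff_divide_distrib[symmetric])
    qed simp
    then show ?thesis using True by simp
  next
    case False
    have "poly (l r) v = (\<Prod>u\<in>S - {r}. poly (smult (1 / (r - u)) [:- u, 1:]) v)"
      unfolding l_def poly_prod by simp
    also have "\<dots> = 0" using False that fS by (intro prod_zero) (auto intro!: bexI[of _ v])
    finally show ?thesis using False by simp
  qed
  define f where "f r = pev (l r) x" for r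
  have idem: "m (f r) (f r) = f r" if r: "r \<in> S" for r
  proof -
    have "pev (l r * l r - l r) x = 0"
      by (rule vanish_pev[OF fS g]) (use pl r in auto)
    then show ?thesis by (simp add: f_def pev_diff pev_mult)
  qed
  have "pev (monom 1 2 - (\<Sum>r\<in>S. smult (r^2) (l r))) x = 0"
  proof (rule vanish_pev[OF fS g], intro ballI)
    fix v assume v: "v \<in> S"
    have "(\<Sum>r\<in>S. r^2 * poly (l r) v) = (\<Sum>r\<in>S. if r = v then r^2 else 0)"
      by (rule sum.cong) (use pl v in auto)
    also have "\<dots> = v^2" using fS v by simp
    finally show "poly (monom 1 2 - (\<Sum>r\<in>S. smult (r^2) (l r))) v = 0"
      by (simp add: poly_sum poly_monom)
  qed
  then have "m x x = (\<Sum>r\<in>S. r^2 *\<^sub>R f r)"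
    by (simp add: pev_diff pev_sum pev_smult pev_monom pw2 f_def)
  with fS idem show ?thesis by blast
qed

end

definition trB :: "'a::real_vector set \<Rightarrow> ('a \<Rightarrow> 'a) \<Rightarrow> real" where
  "trB B T = (\<Sum>b\<in>B. representation B (T b) b)"

locale fbasis =
  fixes B :: "'a::real_vector set"
  assumes finB: "finite B" and indB: "independent B" and spB: "span B = UNIV"
begin

lemma finB': "finite B" by (rule finB)
lemma spB': "span B = UNIV" by (rule spB)

lemma r1: "(\<Sum>b\<in>B. representation B v b *\<^sub>R b) = v"
  by (rule sum_representation_eq) (use indB spB finB in auto)

lemma r_add: "representation B (u + v) b = representation B u b + representation B v b"
  using representation_add[OF indB, of v u] spB by simp

lemma r_scale: "representation B (c *\<^sub>R v) b = c * representation B v b"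
  using representation_scale[OF indB, of v c] spB by simp

lemma r_sum: "representation B (sum f I) b = (\<Sum>i\<in>I. representation B (f i) b)"
  using representation_sum[OF indB, of I f] spB by simp

lemma r_diff: "representation B (u - v) b = representation B u b - representation B v b"
  using representation_diff[OF indB, of v u] spB by simp

lemma r_zero: "representation B 0 b = 0"
  by (simp add: representation_zero)

lemma tr_comp:
  assumes A: "linear A"
  shows "trB B (\<lambda>v. A (T v)) = (\<Sum>b\<in>B. \<Sum>c\<in>B. representation B (T b) c * representation B (A c) b)"
proof -
  have "A (T b) = (\<Sum>c\<in>B. representation B (T b) c *\<^sub>R A c)" for b
  proof -
    have "A (T b) = A (\<Sum>c\<in>B. representation B (T b) c *\<^sub>R c)" by (simp add: r1)
    also have "\<dots> = (\<Sum>c\<in>B. representation B (T b) c *\<^sub>R A c)"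
      by (simp add: linear_sum[OF A] linear_scale[OF A])
    finally show ?thesis .
  qed
  then show ?thesis unfolding trB_def by (simp add: r_sum r_scale)
qed

lemma tr_cycl:
  assumes A: "linear A" and T: "linear T"
  shows "trB B (\<lambda>v. A (T v)) = trB B (\<lambda>v. T (A v))"
  unfolding tr_comp[OF A] tr_comp[OF T]
  by (subst sum.swap) (simp add: mult.commute)

lemma tr_add: "trB B (\<lambda>v. S v + T v) = trB B S + trB B T"
  by (simp add: trB_def r_add sum.distrib)

lemma tr_scale: "trB B (\<lambda>v. c *\<^sub>R T v) = c * trB B T"
  by (simp add: trB_def r_scale sum_distrib_left)

lemma tr_cong: "(\<And>v. S v = T v) \<Longrightarrow> trB B S = trB B T"
  by (simp add: trB_def)

end

lemma tr_indep:
  assumes B: "fbasis B" and C: "fbasis C" and T: "linear T"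
  shows "trB B T = trB C T"
proof -
  interpret b: fbasis B by (rule B)
  interpret c: fbasis C by (rule C)
  have "trB B T = (\<Sum>b\<in>B. representation B (T (\<Sum>c\<in>C. representation C b c *\<^sub>R c)) b)"
    by (simp add: trB_def c.r1)
  also have "\<dots> = (\<Sum>b\<in>B. \<Sum>c\<in>C. representation C b c * representation B (T c) b)"
    by (simp add: linear_sum[OF T] linear_scale[OF T] b.r_sum b.r_scale)
  also have "\<dots> = (\<Sum>c\<in>C. \<Sum>b\<in>B. representation B (T c) b * representation C b c)"
    by (subst sum.swap) (simp add: mult.commute)
  also have "\<dots> = (\<Sum>c\<in>C. representation C (\<Sum>b\<in>B. representation B (T c) b *\<^sub>R b) c)"
    by (simp add: c.r_sum c.r_scale)
  also have "\<dots> = trB C T" by (simp add: b.r1 trB_def)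
  finally show ?thesis .
qed

lemma tr_idem:
  assumes B: "fbasis B" and P: "linear P" and idem: "\<And>v. P (P v) = P v"
  shows "trB B P \<ge> 0" "P v \<noteq> 0 \<Longrightarrow> trB B P > 0"
proof -
  interpret b: fbasis B by (rule B)
  define Q where "Q v = v - P v" for v
  obtain B1 where B1: "B1 \<subseteq> range P" "independent B1" "range P \<subseteq> span B1"
    by (rule basis_exists)
  obtain B2 where B2: "B2 \<subseteq> range Q" "independent B2" "range Q \<subseteq> span B2"
    by (rule basis_exists)
  have fB1: "finite B1" using independent_span_bound[OF b.finB' B1(2)] b.spB' by auto
  have fB2: "finite B2" using independent_span_bound[OF b.finB' B2(2)] b.spB' by auto
  have P1: "P u = u" if "u \<in> B1" for u using that B1(1) idem by auto
  have P2: "P u = 0" if "u \<in> B2" for u using that B2(1) idem linear_diff[OF P]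
    by (auto simp: Q_def)
  have disj: "B1 \<inter> B2 = {}"
  proof (rule ccontr)
    assume "B1 \<inter> B2 \<noteq> {}"
    then obtain u where "u \<in> B1" "u \<in> B2" by auto
    then have "u = 0" using P1 P2 by metis
    with \<open>u \<in> B1\<close> B1(2) show False using dependent_zero by auto
  qed
  define C where "C = B1 \<union> B2"
  have fC: "finite C" using fB1 fB2 by (simp add: C_def)
  have spC: "span C = UNIV"
  proof -
    have "v \<in> span C" for v
    proof -
      have "P v \<in> span C" using B1(3) span_mono[of B1 C] by (auto simp: C_def)
      moreover have "Q v \<in> span C" using B2(3) span_mono[of B2 C] by (auto simp: C_def)
      ultimately have "P v + Q v \<in> span C" by (rule span_add)
      then show ?thesis by (simp add: Q_def)
    qed
    then show ?thesis by auto
  qed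
  have ind_iff: "independent A \<longleftrightarrow> (\<forall>c. (\<Sum>v\<in>A. c v *\<^sub>R v) = 0 \<longrightarrow> (\<forall>v\<in>A. c v = 0))"
    if "finite A" for A :: "'a set"
    using dependent_finite[OF that] by auto
  have indC: "independent C"
    unfolding ind_iff[OF fC]
  proof (intro allI impI ballI)
    fix c v assume sum0: "(\<Sum>v\<in>C. c v *\<^sub>R v) = 0" and v: "v \<in> C"
    have split: "(\<Sum>v\<in>C. c v *\<^sub>R v) = (\<Sum>v\<in>B1. c v *\<^sub>R v) + (\<Sum>v\<in>B2. c v *\<^sub>R v)"
      unfolding C_def by (rule sum.union_disjoint) (use fB1 fB2 disj in auto)
    have "P (\<Sum>v\<in>C. c v *\<^sub>R v) = (\<Sum>v\<in>B1. c v *\<^sub>R v)"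
      unfolding split by (simp add: linear_add[OF P] linear_sum[OF P] linear_scale[OF P] P1 P2)
    then have s1: "(\<Sum>v\<in>B1. c v *\<^sub>R v) = 0" using sum0 linear_0[OF P] by simp
    then have c1: "\<forall>v\<in>B1. c v = 0" using B1(2) unfolding ind_iff[OF fB1] by blast
    from s1 sum0 split have "(\<Sum>v\<in>B2. c v *\<^sub>R v) = 0" by simp
    then have c2: "\<forall>v\<in>B2. c v = 0" using B2(2) unfolding ind_iff[OF fB2] by blast
    from c1 c2 v show "c v = 0" by (auto simp: C_def)
  qed
  interpret c: fbasis C by unfold_locales (use fC indC spC in auto)
  have "trB C P = (\<Sum>u\<in>B1. representation C (P u) u) + (\<Sum>u\<in>B2. representation C (P u) u)"
    unfolding trB_def C_def by (rule sum.union_disjoint) (use fB1 fB2 disj in auto)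
  also have "\<dots> = (\<Sum>u\<in>B1. 1) + (\<Sum>u\<in>B2. 0)"
    using representation_basis[OF indC] by (auto simp: P1 P2 representation_zero C_def intro!: sum.cong)
  finally have trC: "trB C P = real (card B1)" by simp
  have eq: "trB B P = real (card B1)"
    using tr_indep[OF B _ P, of C] trC c.fbasis_axioms by simp
  then show "trB B P \<ge> 0" by simp
  assume "P v \<noteq> 0"
  then have "B1 \<noteq> {}" using B1(3) by (metis rangeI singletonD subsetD span_empty)
  with fB1 have "card B1 > 0" by (simp add: card_gt_0_iff)
  with eq show "trB B P > 0" by simp
qed

lemma scaleR_3: "(3::real) *\<^sub>R (x::'a::real_vector) = x + x + x"
proof -
  have "(3::real) = 1 + 1 + 1" by simp
  then show ?thesis by (metis scaleR_add_left scaleR_one)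
qed

context jfr
begin

lemma ex_fbasis: "\<exists>B::'a set. fbasis B"
proof -
  obtain B :: "'a set" where B: "B \<subseteq> UNIV" "independent B" "UNIV \<subseteq> span B" by (rule basis_exists)
  have "finite B" using independent_span_bound[OF finB0 B(2)] spanB0 by auto
  with B show ?thesis by (intro exI[of _ B]) (unfold_locales, auto)
qed

definition bas :: "'a set" where "bas = (SOME B. fbasis B)"

lemma bas: "fbasis bas"
  unfolding bas_def using ex_fbasis by (rule someI_ex)

interpretation bs: fbasis bas by (rule bas)

definition phi :: "'a \<Rightarrow> real" where "phi z = trB bas (m z)"

lemma phi_add: "phi (a + b) = phi a + phi b"
proof -
  have "trB bas (m (a + b)) = trB bas (\<lambda>v. m a v + m b v)" by (rule bs.tr_cong) (simp add: add_left)
  also have "\<dots> = trB bas (m a) + trB bas (m b)" by (rule bs.tr_add)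
  finally show ?thesis by (simp add: phi_def)
qed

lemma phi_scale: "phi (c *\<^sub>R a) = c * phi a"
proof -
  have "trB bas (m (c *\<^sub>R a)) = trB bas (\<lambda>v. c *\<^sub>R m a v)" by (rule bs.tr_cong) (simp add: scale_left)
  also have "\<dots> = c * trB bas (m a)" by (rule bs.tr_scale)
  finally show ?thesis by (simp add: phi_def)
qed

lemma phi_lin: "linear phi"
  by (rule linearI) (simp_all add: phi_add phi_scale)

lemma phi_diff: "phi (a - b) = phi a - phi b"
  using linear_diff[OF phi_lin] .

lemma phi_sum: "phi (sum f I) = (\<Sum>i\<in>I. phi (f i))"
  using linear_sum[OF phi_lin] .

lemma phi_zero: "phi 0 = 0"
  using linear_0[OF phi_lin] .

lemma phi_idem:
  assumes ff: "m f f = f"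
  shows "phi f \<ge> 0" "f \<noteq> 0 \<Longrightarrow> phi f > 0"
proof -
  have cub: "m f (m f (m f v)) = (3/2) *\<^sub>R m f (m f v) - (1/2) *\<^sub>R m f v" for v
  proof -
    have "m (m v f) (m f f) + 2 *\<^sub>R m (m f f) (m f v) - m v (m f (m f f)) - 2 *\<^sub>R m f (m f (m f v)) = 0"
      by (rule J1)
    moreover have "m (m v f) (m f f) = m f (m f v)" using ff by (metis comm)
    moreover have "m v (m f (m f f)) = m f v" using ff by (metis comm)
    ultimately have "3 *\<^sub>R m f (m f v) - m f v - 2 *\<^sub>R m f (m f (m f v)) = 0"
      using ff by (simp add: algebra_simps scaleR_2 scaleR_3)
    then have E: "2 *\<^sub>R m f (m f (m f v)) = 3 *\<^sub>R m f (m f v) - m f v" by (simp add: algebra_simps)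
    have "m f (m f (m f v)) = (1/2) *\<^sub>R (2 *\<^sub>R m f (m f (m f v)))" by simp
    also have "\<dots> = (1/2) *\<^sub>R (3 *\<^sub>R m f (m f v) - m f v)" by (simp only: E)
    finally show ?thesis by (simp add: algebra_simps)
  qed
  define P1 where "P1 v = 2 *\<^sub>R m f (m f v) - m f v" for v
  define Ph where "Ph v = 4 *\<^sub>R m f v - 4 *\<^sub>R m f (m f v)" for v
  have lP1: "linear P1" unfolding P1_def by (rule linearI) (simp_all add: bil algebra_simps)
  have lPh: "linear Ph" unfolding Ph_def by (rule linearI) (simp_all add: bil algebra_simps)
  have iP1: "P1 (P1 v) = P1 v" and iPh: "Ph (Ph v) = Ph v" for v
  proof -
    define g where "g c1 c2 = c1 *\<^sub>R m f v + c2 *\<^sub>R m f (m f v)" for c1 c2 :: real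
    have G_diff: "g c1 c2 - g d1 d2 = g (c1 - d1) (c2 - d2)" for c1 c2 d1 d2
      by (simp add: g_def algebra_simps)
    have G_scale: "k *\<^sub>R g c1 c2 = g (k * c1) (k * c2)" for k c1 c2
      by (simp add: g_def algebra_simps)
    have G_L: "m f (g c1 c2) = g (-(1/2) * c2) (c1 + (3/2) * c2)" for c1 c2
      by (simp add: g_def bil cub algebra_simps)
    have p1: "P1 v = g (-1) 2" by (simp add: P1_def g_def)
    have ph: "Ph v = g 4 (-4)" by (simp add: Ph_def g_def)
    show "P1 (P1 v) = P1 v" unfolding p1 by (simp add: P1_def G_L G_scale G_diff)
    show "Ph (Ph v) = Ph v" unfolding ph by (simp add: Ph_def G_L G_scale G_diff)
  qed
  have dec: "m f v = P1 v + (1/2) *\<^sub>R Ph v" for v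
    unfolding P1_def Ph_def by (simp add: algebra_simps scaleR_2)
  have tr: "phi f = trB bas P1 + (1/2) * trB bas Ph"
  proof -
    have "trB bas (m f) = trB bas (\<lambda>v. P1 v + (1/2) *\<^sub>R Ph v)" by (rule bs.tr_cong) (rule dec)
    also have "\<dots> = trB bas P1 + trB bas (\<lambda>v. (1/2) *\<^sub>R Ph v)" by (rule bs.tr_add)
    also have "trB bas (\<lambda>v. (1/2) *\<^sub>R Ph v) = (1/2) * trB bas Ph" by (rule bs.tr_scale)
    finally show ?thesis by (simp add: phi_def)
  qed
  have t1: "trB bas P1 \<ge> 0" by (rule tr_idem(1)[OF bas lP1 iP1])
  have t2: "trB bas Ph \<ge> 0" by (rule tr_idem(1)[OF bas lPh iPh])
  from t1 t2 tr show "phi f \<ge> 0" by simp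
  assume "f \<noteq> 0"
  moreover have "P1 f = f" unfolding P1_def using ff by (simp add: scaleR_2)
  ultimately have "trB bas P1 > 0" using tr_idem(2)[OF bas lP1 iP1, of f] by simp
  with t2 tr show "phi f > 0" by simp
qed

lemma phi_pos:
  assumes "x \<noteq> 0"
  shows "phi (m x x) > 0"
proof -
  obtain S f where fS: "finite S" and idem: "\<forall>r\<in>S. m (f r) (f r) = f r"
    and sq: "m x x = (\<Sum>r\<in>S. r^2 *\<^sub>R f r)"
    using spectral[of x] by blast
  have "m x x \<noteq> 0" using assms fr1 by blast
  then obtain r where r: "r \<in> S" "r^2 *\<^sub>R f r \<noteq> 0" using sq by (metis (no_types, lifting) sum.neutral)
  have "phi (m x x) = (\<Sum>r\<in>S. r^2 * phi (f r))" by (simp add: sq phi_sum phi_scale)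
  also have "\<dots> > 0"
  proof (rule sum_pos2[OF fS r(1)])
    have "r \<noteq> 0" "f r \<noteq> 0" using r by auto
    then show "0 < r^2 * phi (f r)" using phi_idem(2)[of "f r"] idem r by simp
    show "\<And>i. i \<in> S \<Longrightarrow> 0 \<le> i^2 * phi (f i)" using phi_idem(1) idem by simp
  qed
  finally show ?thesis .
qed

lemma phi_inv:
  assumes ss: "m s s = e"
  shows "phi (UU s z) = phi z"
proof -
  have lT: "linear (\<lambda>v. m z (UU s v))"
    using linear_compose[OF UU_lin lin_right] by (simp add: o_def)
  have "phi (UU s z) = trB bas (\<lambda>v. UU s (m z (UU s v)))"
    unfolding phi_def by (rule bs.tr_cong) (rule UU_key[OF ss])
  also have "\<dots> = trB bas (\<lambda>v. m z (UU s (UU s v)))"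
    by (rule bs.tr_cycl[OF UU_lin lT])
  also have "\<dots> = phi z" by (simp add: phi_def UU_invol[OF ss])
  finally show ?thesis .
qed

end

context jfr
begin

lemma pol: "m a b = (1/2) *\<^sub>R (m (a + b) (a + b) - m a a - m b b)"
proof -
  have "m (a + b) (a + b) - m a a - m b b = 2 *\<^sub>R m a b"
    by (simp add: bil comm[of b a] scaleR_2)
  then show ?thesis by simp
qed

lemma main:
  assumes loc: "\<And>x y. \<exists>s. m s s = e \<and> \<Delta> x = UU s x \<and> \<Delta> y = UU s y"
  shows "linear \<Delta> \<and> bij \<Delta> \<and> (\<forall>x y. \<Delta> (m x y) = m (\<Delta> x) (\<Delta> y))"
proof -
  have pres: "phi (m (\<Delta> u) (\<Delta> v)) = phi (m u v)" for u v
  proof -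
    obtain s where s: "m s s = e" "\<Delta> u = UU s u" "\<Delta> v = UU s v" using loc[of u v] by blast
    then show ?thesis by (simp add: UU_hom[OF s(1), symmetric] phi_inv[OF s(1)])
  qed
  have zero_of: "u = 0" if "phi (m u u) = 0" for u
    using phi_pos[of u] that by fastforce
  have addD: "\<Delta> (x + y) = \<Delta> x + \<Delta> y" for x y
  proof -
    define D where "D = \<Delta> (x + y) - \<Delta> x - \<Delta> y"
    have orth: "phi (m D (\<Delta> w)) = 0" for w
    proof -
      have "phi (m D (\<Delta> w)) = phi (m (\<Delta> (x + y)) (\<Delta> w)) - phi (m (\<Delta> x) (\<Delta> w)) - phi (m (\<Delta> y) (\<Delta> w))"
        by (simp add: D_def diff_left phi_diff)
      also have "\<dots> = phi (m (x + y) w) - phi (m x w) - phi (m y w)" by (simp add: pres)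
      also have "\<dots> = 0" by (simp add: add_left phi_add)
      finally show ?thesis .
    qed
    have "phi (m D D) = phi (m D (\<Delta> (x + y) - \<Delta> x - \<Delta> y))" using D_def by simp
    also have "\<dots> = phi (m D (\<Delta> (x + y))) - phi (m D (\<Delta> x)) - phi (m D (\<Delta> y))"
      by (simp add: diff_right phi_diff)
    also have "\<dots> = 0" by (simp add: orth)
    finally have "D = 0" by (rule zero_of)
    then show ?thesis by (simp add: D_def algebra_simps)
  qed
  have scD: "\<Delta> (c *\<^sub>R x) = c *\<^sub>R \<Delta> x" for c x
  proof -
    obtain s where s: "m s s = e" "\<Delta> (c *\<^sub>R x) = UU s (c *\<^sub>R x)" "\<Delta> x = UU s x" using loc by blast
    then show ?thesis using linear_scale[OF UU_lin] by simp
  qed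
  have lin: "linear \<Delta>" by (rule linearI) (simp_all add: addD scD)
  have sq: "\<Delta> (m x x) = m (\<Delta> x) (\<Delta> x)" for x
  proof -
    obtain s where s: "m s s = e" "\<Delta> x = UU s x" "\<Delta> (m x x) = UU s (m x x)" using loc by blast
    then show ?thesis by (simp add: UU_hom)
  qed
  have mult: "\<Delta> (m x y) = m (\<Delta> x) (\<Delta> y)" for x y
    by (subst pol) (simp add: scD linear_diff[OF lin] addD sq pol[of "\<Delta> x" "\<Delta> y"])
  have inj: "inj \<Delta>"
  proof (rule injI)
    fix u v assume "\<Delta> u = \<Delta> v"
    then have "\<Delta> (u - v) = 0" by (simp add: linear_diff[OF lin])
    then have "phi (m (u - v) (u - v)) = 0" using pres[of "u - v" "u - v"] by (simp add: phi_zero)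
    then show "u = v" using zero_of[of "u - v"] by simp
  qed
  interpret fd: finite_dimensional_vector_space "scaleR :: real \<Rightarrow> 'a \<Rightarrow> 'a" bas
    by unfold_locales (use bas in \<open>auto simp: fbasis_def dependent_raw_def span_raw_def\<close>)
  have "surj \<Delta>" by (rule fd.linear_inj_imp_surj[OF lin[unfolded linear_def] inj])
  with inj lin mult show ?thesis by (auto simp: bij_def)
qed

end

theorem theorem5p7:
  fixes m :: "'a::real_vector \<Rightarrow> 'a \<Rightarrow> 'a" and e :: 'a and \<Delta> :: "'a \<Rightarrow> 'a"
  assumes "jordan_algebra m"
    and "jordan_unit m e"
    and "formally_real m"
    and "finite_dim_space TYPE('a)"
    and "two_local_1_automorphism m e \<Delta>"
  shows "jordan_automorphism m \<Delta>"
proof -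
  obtain B0 :: "'a set" where B0: "finite B0" "span B0 = UNIV"
    using assms(4) unfolding finite_dim_space_def by blast
  interpret j: jfr m e B0
  proof unfold_locales
    show "m (x + y) z = m x z + m y z" "m (c *\<^sub>R x) y = c *\<^sub>R m x y" "m x y = m y x"
      "m (m x y) (m x x) = m x (m y (m x x))" for x y z c
      using assms(1) unfolding jordan_algebra_def by auto
    show "m e x = x" for x using assms(2) unfolding jordan_unit_def by auto
    show "(\<Sum>i<(n::nat). m (a i) (a i)) = 0 \<Longrightarrow> \<forall>i<n. a i = 0" for n a
      using assms(3) unfolding formally_real_def by blast
  qed (use B0 in auto)
  have loc: "\<exists>s. m s s = e \<and> \<Delta> x = j.UU s x \<and> \<Delta> y = j.UU s y" for x y
    using assms(5) unfolding two_local_1_automorphism_def symmetry_def U_op_def j.UU_def by blast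
  have "linear \<Delta> \<and> bij \<Delta> \<and> (\<forall>x y. \<Delta> (m x y) = m (\<Delta> x) (\<Delta> y))"
    by (rule j.main) (rule loc)
  then show ?thesis unfolding jordan_automorphism_def by blast
qed

end
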